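(* Let $V$ be a toroidal vertex algebra, let $K_Y(V)=\{v\in V\mid Y(v;x_0,\mathbf{x})=0\}$ (an ideal of $V$) and $\overline{V}=V/K_Y(V)$, the quotient toroidal vertex algebra. Then $\overline{V}$ is a simple toroidal vertex algebra if and only if $V^0$ is a simple toroidal vertex algebra.
   Context: Fix a positive integer $r$. Write $\mathbf{x}=(x_1,\dots,x_r)$, $\mathbf{x}^{\mathbf{m}}=x_1^{m_1}\cdots x_r^{m_r}$ (similarly for other variables), $\mathbf{z}\mathbf{y}=(z_1y_1,\dots,z_ry_r)$. For a vector space $W$ put $\mathcal{E}(W,r)=\mathrm{Hom}(W,W[[x_1^{\pm1},\dots,x_r^{\pm1}]]((x_0)))$. A toroidal vertex algebra is a vector space $V$ with a linear map $Y(\cdot;x_0,\mathbf{x}):V\to\mathcal{E}(V,r)$, $v\mapsto\sum_{(m_0,\mathbf{m})\in\mathbb{Z}\times\mathbb{Z}^r}v_{m_0,\mathbf{m}}x_0^{-m_0-1}\mathbf{x}^{-\mathbf{m}}$, and a vector $\mathbf{1}$ with $Y(\mathbf{1};x_0,\mathbf{x})v=v$, $Y(v;x_0,\mathbf{x})\mathbf{1}\in V[[x_0,x_1^{\pm1},\dots,x_r^{\pm1}]]$, and the Jacobi identity $$z_0^{-1}\delta\!\left(\tfrac{x_0-y_0}{z_0}\right)Y(u;x_0,\mathbf{z}\mathbf{y})Y(v;y_0,\mathbf{y})-z_0^{-1}\delta\!\left(\tfrac{y_0-x_0}{-z_0}\right)Y(v;y_0,\mathbf{y})Y(u;x_0,\mathbf{z}\mathbf{y})=y_0^{-1}\delta\!\left(\tfrac{x_0-z_0}{y_0}\right)Y(Y(u;z_0,\mathbf{z})v;y_0,\mathbf{y})$$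 for all $u,v$, where $Y(u;x_0,\mathbf{z}\mathbf{y})=\sum u_{m_0,\mathbf{m}}x_0^{-m_0-1}\mathbf{z}^{-\mathbf{m}}\mathbf{y}^{-\mathbf{m}}$. An ideal is a subspace $I$ with $u_{m_0,\mathbf{m}}v\in I$ whenever $u\in I$ or $v\in I$; a toroidal vertex algebra is simple if its only ideals are $0$ and itself. $V^0=\mathrm{span}\{v_{m_0,\mathbf{m}}\mathbf{1}\mid v\in V,(m_0,\mathbf{m})\in\mathbb{Z}\times\mathbb{Z}^r\}$ is a toroidal vertex subalgebra of $V$. *)

theory Defs
  imports "HOL-Analysis.Finite_Cartesian_Product" "HOL-Library.Groups_Big_Fun"
begin

text \<open>A vertex operator is encoded by its modes:
  Y u m0 m v  stands for  u_{m0,m} v, the coefficient of x0^(-m0-1) x^(-m) in Y(u;x0,x) v.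
  Multi-indices in Z^r are elements of int^'r, where the finite index type 'r has r elements.\<close>

definition toroidal_va ::
  "(complex \<Rightarrow> 'v::ab_group_add \<Rightarrow> 'v) \<Rightarrow> 'v set \<Rightarrow>
   ('v \<Rightarrow> int \<Rightarrow> int ^ 'r \<Rightarrow> 'v \<Rightarrow> 'v) \<Rightarrow> 'v \<Rightarrow> bool" where
  "toroidal_va smul S Y vac \<longleftrightarrow>
     vector_space smul \<and> module.subspace smul S \<and> vac \<in> S \<and>
     \<comment> \<open>the modes map S x S into S\<close>
     (\<forall>u\<in>S. \<forall>v\<in>S. \<forall>m0 m. Y u m0 m v \<in> S) \<and>
     \<comment> \<open>Y is linear, and each Y(u;x0,x) is a linear endomorphism of S\<close>
     (\<forall>u\<in>S. \<forall>u'\<in>S. \<forall>v\<in>S. \<forall>m0 m. Y (u + u') m0 m v = Y u m0 m v + Y u' m0 m v) \<and>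
     (\<forall>u\<in>S. \<forall>v\<in>S. \<forall>a m0 m. Y (smul a u) m0 m v = smul a (Y u m0 m v)) \<and>
     (\<forall>u\<in>S. \<forall>v\<in>S. \<forall>v'\<in>S. \<forall>m0 m. Y u m0 m (v + v') = Y u m0 m v + Y u m0 m v') \<and>
     (\<forall>u\<in>S. \<forall>v\<in>S. \<forall>a m0 m. Y u m0 m (smul a v) = smul a (Y u m0 m v)) \<and>
     \<comment> \<open>Y(u;x0,x)v lies in S[[x_1^{\<plusminus>1},...,x_r^{\<plusminus>1}]]((x0))\<close>
     (\<forall>u\<in>S. \<forall>v\<in>S. \<exists>N. \<forall>m0\<ge>N. \<forall>m. Y u m0 m v = 0) \<and>
     \<comment> \<open>vacuum property: Y(1;x0,x)v = v\<close>
     (\<forall>v\<in>S. \<forall>m0 m. Y vac m0 m v = (if m0 = -1 \<and> m = 0 then v else 0)) \<and>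
     \<comment> \<open>creation property: Y(v;x0,x)1 \<in> S[[x0, x_1^{\<plusminus>1},...,x_r^{\<plusminus>1}]]\<close>
     (\<forall>v\<in>S. \<forall>m0 m. m0 \<ge> 0 \<longrightarrow> Y v m0 m vac = 0) \<and>
     \<comment> \<open>Jacobi identity, written out coefficientwise: coefficient of
        z0^(-l-1) x0^(-p-1) y0^(-n-1) z^(-a) y^(-b), applied to w\<close>
     (\<forall>u\<in>S. \<forall>v\<in>S. \<forall>w\<in>S. \<forall>(l::int) (p::int) (n::int) (a::int^'r) (b::int^'r).
        (\<Sum>i. smul ((of_int p :: complex) gchoose i) (Y (Y u (l + int i) a v) (p + n - int i) b w))
        = (\<Sum>i. smul ((-1) ^ i * ((of_int l :: complex) gchoose i))
                 (Y u (l + p - int i) a (Y v (n + int i) (b - a) w)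
                  - smul (of_int ((-1) ^ nat \<bar>l\<bar>)) (Y v (l + n - int i) (b - a) (Y u (p + int i) a w)))))"

definition tva_ideal ::
  "(complex \<Rightarrow> 'v::ab_group_add \<Rightarrow> 'v) \<Rightarrow> 'v set \<Rightarrow>
   ('v \<Rightarrow> int \<Rightarrow> int ^ 'r \<Rightarrow> 'v \<Rightarrow> 'v) \<Rightarrow> 'v set \<Rightarrow> bool" where
  "tva_ideal smul S Y I \<longleftrightarrow>
     module.subspace smul I \<and> I \<subseteq> S \<and>
     (\<forall>u\<in>S. \<forall>v\<in>S. \<forall>m0 m. (u \<in> I \<or> v \<in> I) \<longrightarrow> Y u m0 m v \<in> I)"

definition simple_tva ::
  "(complex \<Rightarrow> 'v::ab_group_add \<Rightarrow> 'v) \<Rightarrow> 'v set \<Rightarrow>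
   ('v \<Rightarrow> int \<Rightarrow> int ^ 'r \<Rightarrow> 'v \<Rightarrow> 'v) \<Rightarrow> 'v \<Rightarrow> bool" where
  "simple_tva smul S Y vac \<longleftrightarrow>
     toroidal_va smul S Y vac \<and> (\<forall>I. tva_ideal smul S Y I \<longrightarrow> I = {0} \<or> I = S)"

definition K_Y :: "'v set \<Rightarrow> ('v \<Rightarrow> int \<Rightarrow> int ^ 'r \<Rightarrow> 'v \<Rightarrow> 'v::zero) \<Rightarrow> 'v set" where
  "K_Y S Y = {v \<in> S. \<forall>m0 m. \<forall>w\<in>S. Y v m0 m w = 0}"

definition V0 ::
  "(complex \<Rightarrow> 'v::ab_group_add \<Rightarrow> 'v) \<Rightarrow> 'v set \<Rightarrow>
   ('v \<Rightarrow> int \<Rightarrow> int ^ 'r \<Rightarrow> 'v \<Rightarrow> 'v) \<Rightarrow> 'v \<Rightarrow> 'v set" where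
  "V0 smul S Y vac = module.span smul {Y v m0 m vac | v m0 m. v \<in> S}"

definition is_quotient_by_KY ::
  "(complex \<Rightarrow> 'v::ab_group_add \<Rightarrow> 'v) \<Rightarrow> 'v set \<Rightarrow>
   ('v \<Rightarrow> int \<Rightarrow> int ^ 'r \<Rightarrow> 'v \<Rightarrow> 'v) \<Rightarrow> 'v \<Rightarrow>
   (complex \<Rightarrow> 'w::ab_group_add \<Rightarrow> 'w) \<Rightarrow> 'w set \<Rightarrow>
   ('w \<Rightarrow> int \<Rightarrow> int ^ 'r \<Rightarrow> 'w \<Rightarrow> 'w) \<Rightarrow> 'w \<Rightarrow> ('v \<Rightarrow> 'w) \<Rightarrow> bool" where
  "is_quotient_by_KY smul S Y vac smulW W YW vacW \<pi> \<longleftrightarrow>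
     toroidal_va smulW W YW vacW \<and>
     \<pi> ` S = W \<and>
     (\<forall>u\<in>S. \<forall>v\<in>S. \<pi> (u + v) = \<pi> u + \<pi> v) \<and>
     (\<forall>u\<in>S. \<forall>a. \<pi> (smul a u) = smulW a (\<pi> u)) \<and>
     \<pi> vac = vacW \<and>
     (\<forall>u\<in>S. \<forall>v\<in>S. \<forall>m0 m. \<pi> (Y u m0 m v) = YW (\<pi> u) m0 m (\<pi> v)) \<and>
     {v \<in> S. \<pi> v = 0} = K_Y S Y"

end

theory Submission imports Defs begin

lemma Sum_any_in_subspace:
  assumes "module smul" "module.subspace smul T" "\<And>i. f i \<in> T"
  shows "Sum_any f \<in> T"
proof -
  interpret M: module smul by fact
  show ?thesis unfolding Sum_any.expand_set
    by (rule M.subspace_sum[OF assms(2) assms(3)])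
qed

context
  fixes smul :: "complex \<Rightarrow> 'v::ab_group_add \<Rightarrow> 'v"
    and V :: "'v set"
    and Y :: "'v \<Rightarrow> int \<Rightarrow> int ^ 'r \<Rightarrow> 'v \<Rightarrow> 'v"
    and vac :: 'v
  assumes TV: "toroidal_va smul V Y vac"
begin

lemma tv_module: "module smul"
  using TV by (simp add: toroidal_va_def module_iff_vector_space)

interpretation M: module smul by (rule tv_module)

lemma tv_sub: "M.subspace V" using TV by (simp add: toroidal_va_def)
lemma tv_vac: "vac \<in> V" using TV by (simp add: toroidal_va_def)
lemma tv_closed: "u \<in> V \<Longrightarrow> v \<in> V \<Longrightarrow> Y u m0 m v \<in> V"
  using TV by (simp add: toroidal_va_def)
lemma tv_addL: "u \<in> V \<Longrightarrow> u' \<in> V \<Longrightarrow> v \<in> V \<Longrightarrow> Y (u + u') m0 m v = Y u m0 m v + Y u' m0 m v"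
  using TV by (simp add: toroidal_va_def)
lemma tv_smulL: "u \<in> V \<Longrightarrow> v \<in> V \<Longrightarrow> Y (smul a u) m0 m v = smul a (Y u m0 m v)"
  using TV by (simp add: toroidal_va_def)
lemma tv_addR: "u \<in> V \<Longrightarrow> v \<in> V \<Longrightarrow> v' \<in> V \<Longrightarrow> Y u m0 m (v + v') = Y u m0 m v + Y u m0 m v'"
  using TV by (simp add: toroidal_va_def)
lemma tv_smulR: "u \<in> V \<Longrightarrow> v \<in> V \<Longrightarrow> Y u m0 m (smul a v) = smul a (Y u m0 m v)"
  using TV by (simp add: toroidal_va_def)
lemma tv_trunc: "u \<in> V \<Longrightarrow> v \<in> V \<Longrightarrow> \<exists>N. \<forall>m0\<ge>N. \<forall>m. Y u m0 m v = 0"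
  using TV by (simp add: toroidal_va_def)
lemma tv_vacuum: "v \<in> V \<Longrightarrow> Y vac m0 m v = (if m0 = -1 \<and> m = 0 then v else 0)"
  using TV by (simp add: toroidal_va_def)
lemma tv_creation: "v \<in> V \<Longrightarrow> m0 \<ge> 0 \<Longrightarrow> Y v m0 m vac = 0"
  using TV by (simp add: toroidal_va_def)
lemma tv_jac_all: "(\<forall>u\<in>V. \<forall>v\<in>V. \<forall>w\<in>V. \<forall>(l::int) (p::int) (n::int) (a::int^'r) (b::int^'r).
        Sum_any (\<lambda>i. smul ((of_int p :: complex) gchoose i) (Y (Y u (l + int i) a v) (p + n - int i) b w))
        = Sum_any (\<lambda>i. smul ((-1) ^ i * ((of_int l :: complex) gchoose i))
                 (Y u (l + p - int i) a (Y v (n + int i) (b - a) w)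
                  - smul (of_int ((-1) ^ nat \<bar>l\<bar>)) (Y v (l + n - int i) (b - a) (Y u (p + int i) a w)))))"
  using TV unfolding toroidal_va_def by (elim conjE) assumption

lemma tv_jac: "u \<in> V \<Longrightarrow> v \<in> V \<Longrightarrow> w \<in> V \<Longrightarrow>
        Sum_any (\<lambda>i. smul ((of_int p :: complex) gchoose i) (Y (Y u (l + int i) a v) (p + n - int i) b w))
        = Sum_any (\<lambda>i. smul ((-1) ^ i * ((of_int l :: complex) gchoose i))
                 (Y u (l + p - int i) a (Y v (n + int i) (b - a) w)
                  - smul (of_int ((-1) ^ nat \<bar>l\<bar>)) (Y v (l + n - int i) (b - a) (Y u (p + int i) a w))))"
  by (rule tv_jac_all[rule_format]) assumption+

lemma tv_0V: "0 \<in> V" using M.subspace_0[OF tv_sub] .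

lemma tv_Y0L: "v \<in> V \<Longrightarrow> Y 0 m0 m v = 0"
  using tv_addL[OF tv_0V tv_0V, of v m0 m] by simp
lemma tv_Y0R: "u \<in> V \<Longrightarrow> Y u m0 m 0 = 0"
  using tv_addR[OF _ tv_0V tv_0V, of u m0 m] by simp

lemma tv_L1:
  assumes u: "u \<in> V" and y: "y \<in> V"
  shows "Y (Y u l a y) n b vac = Sum_any (\<lambda>i. smul ((-1) ^ i * ((of_int l :: complex) gchoose i))
                 (Y u (l - int i) a (Y y (n + int i) (b - a) vac)))"
proof -
  have J: "Sum_any (\<lambda>i. smul ((of_int 0 :: complex) gchoose i) (Y (Y u (l + int i) a y) (0 + n - int i) b vac))
        = Sum_any (\<lambda>i. smul ((-1) ^ i * ((of_int l :: complex) gchoose i))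
                 (Y u (l + 0 - int i) a (Y y (n + int i) (b - a) vac)
                  - smul (of_int ((-1) ^ nat \<bar>l\<bar>)) (Y y (l + n - int i) (b - a) (Y u (0 + int i) a vac))))"
    by (rule tv_jac[OF u y tv_vac])
  have L: "(\<lambda>i. smul ((of_int 0 :: complex) gchoose i) (Y (Y u (l + int i) a y) (0 + n - int i) b vac))
     = (\<lambda>i. if i = 0 then Y (Y u l a y) n b vac else 0)"
    by (simp add: fun_eq_iff gbinomial_0_left)
  have R: "(\<lambda>i. smul ((-1) ^ i * ((of_int l :: complex) gchoose i))
                 (Y u (l + 0 - int i) a (Y y (n + int i) (b - a) vac)
                  - smul (of_int ((-1) ^ nat \<bar>l\<bar>)) (Y y (l + n - int i) (b - a) (Y u (0 + int i) a vac))))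
     = (\<lambda>i. smul ((-1) ^ i * ((of_int l :: complex) gchoose i))
                 (Y u (l - int i) a (Y y (n + int i) (b - a) vac)))"
    by (simp add: fun_eq_iff tv_creation[OF u] tv_Y0R[OF y])
  show ?thesis using J unfolding L R by simp
qed

lemma gch_m1: "((-1 :: complex) gchoose i) = (-1) ^ i"
  using gbinomial_negated_upper[of "-1::complex" i]
  by (simp add: binomial_gbinomial[symmetric])

lemma tv_L2:
  assumes u: "u \<in> V" and w: "w \<in> V"
  shows "Y (Y u (-1) a vac) n a w = Y u n a w"
proof -
  have J: "Sum_any (\<lambda>i. smul ((of_int 0 :: complex) gchoose i) (Y (Y u (-1 + int i) a vac) (0 + n - int i) a w))
        = Sum_any (\<lambda>i. smul ((-1) ^ i * ((of_int (-1) :: complex) gchoose i))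
                 (Y u (-1 + 0 - int i) a (Y vac (n + int i) (a - a) w)
                  - smul (of_int ((-1) ^ nat \<bar>-1::int\<bar>)) (Y vac (-1 + n - int i) (a - a) (Y u (0 + int i) a w))))"
    by (rule tv_jac[OF u tv_vac w])
  have L: "(\<lambda>i. smul ((of_int 0 :: complex) gchoose i) (Y (Y u (-1 + int i) a vac) (0 + n - int i) a w))
     = (\<lambda>i. if i = 0 then Y (Y u (-1) a vac) n a w else 0)"
    by (simp add: fun_eq_iff gbinomial_0_left)
  have R: "(\<lambda>i. smul ((-1) ^ i * ((of_int (-1) :: complex) gchoose i))
                 (Y u (-1 + 0 - int i) a (Y vac (n + int i) (a - a) w)
                  - smul (of_int ((-1) ^ nat \<bar>-1::int\<bar>)) (Y vac (-1 + n - int i) (a - a) (Y u (0 + int i) a w))))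
     = (\<lambda>i. if i = (if n < 0 then nat (-1 - n) else nat n) then Y u n a w else 0)"
  proof
    fix i
    have c: "(-1) ^ i * ((of_int (-1) :: complex) gchoose i) = 1"
      by (simp add: gch_m1 flip: power_mult_distrib)
    show "smul ((-1) ^ i * ((of_int (-1) :: complex) gchoose i))
                 (Y u (-1 + 0 - int i) a (Y vac (n + int i) (a - a) w)
                  - smul (of_int ((-1) ^ nat \<bar>-1::int\<bar>)) (Y vac (-1 + n - int i) (a - a) (Y u (0 + int i) a w)))
         = (if i = (if n < 0 then nat (-1 - n) else nat n) then Y u n a w else 0)"
      unfolding c using tv_vacuum[OF w] tv_vacuum[OF tv_closed[OF u w]] tv_Y0R[OF u]
      by (auto simp: M.scale_minus_left[of 1, simplified])
  qed
  show ?thesis using J unfolding L R by simp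
qed


lemma gch_nat_big: "L < i \<Longrightarrow> ((of_int (int L) :: complex) gchoose i) = 0"
  by (metis binomial_eq_0 binomial_gbinomial of_int_of_nat_eq of_nat_0)

lemma tv_L1fin:
  assumes u: "u \<in> V" and y: "y \<in> V"
  shows "Y (Y u l a y) n b vac = (\<Sum>i<nat (-n). smul ((-1) ^ i * ((of_int l :: complex) gchoose i))
                 (Y u (l - int i) a (Y y (n + int i) (b - a) vac)))"
proof -
  have "Sum_any (\<lambda>i. smul ((-1) ^ i * ((of_int l :: complex) gchoose i))
                 (Y u (l - int i) a (Y y (n + int i) (b - a) vac)))
     = (\<Sum>i<nat (-n). smul ((-1) ^ i * ((of_int l :: complex) gchoose i))
                 (Y u (l - int i) a (Y y (n + int i) (b - a) vac)))"
  proof (rule Sum_any.expand_superset)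
    show "{i. smul ((-1) ^ i * ((of_int l :: complex) gchoose i))
                 (Y u (l - int i) a (Y y (n + int i) (b - a) vac)) \<noteq> 0} \<subseteq> {..<nat (- n)}"
    proof
      fix i assume i: "i \<in> {i. smul ((-1) ^ i * ((of_int l :: complex) gchoose i))
                 (Y u (l - int i) a (Y y (n + int i) (b - a) vac)) \<noteq> 0}"
      show "i \<in> {..<nat (- n)}"
      proof (rule ccontr)
        assume "i \<notin> {..<nat (- n)}"
        then have "n + int i \<ge> 0" by auto
        then have "Y y (n + int i) (b - a) vac = 0" using tv_creation[OF y] by blast
        then show False using i tv_Y0R[OF u] by simp
      qed
    qed
  qed simp
  then show ?thesis using tv_L1[OF u y] by simp
qed

lemma tv_D1:
  assumes T: "M.subspace T" and u: "u \<in> V" and y: "y \<in> V"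
    and H: "\<And>l n b. Y (Y u l a y) n b vac \<in> T"
  shows "Y u c a (Y y n e vac) \<in> T"
proof -
  have "\<forall>c. Y u c a (Y y n e vac) \<in> T"
  proof (induction "nat (-n)" arbitrary: n rule: less_induct)
    case less
    show ?case
    proof (cases "n \<ge> 0")
      case True
      then show ?thesis using tv_creation[OF y True] tv_Y0R[OF u] M.subspace_0[OF T] by simp
    next
      case False
      show ?thesis
      proof
        fix c
        define f where "f i = smul ((-1) ^ i * ((of_int c :: complex) gchoose i))
                 (Y u (c - int i) a (Y y (n + int i) e vac))" for i
        have M0: "0 < nat (-n)" using False by simp
        have E: "Y (Y u c a y) n (e + a) vac = (\<Sum>i<nat (-n). f i)"
          using tv_L1fin[OF u y, of c a n "e + a"] by (simp add: f_def)
        have S: "{..<nat (-n)} = insert 0 {1..<nat (-n)}" using M0 by auto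
        have E2: "(\<Sum>i<nat (-n). f i) = f 0 + (\<Sum>i\<in>{1..<nat (-n)}. f i)"
          unfolding S by simp
        have f0: "f 0 = Y u c a (Y y n e vac)" by (simp add: f_def)
        have rest: "(\<Sum>i\<in>{1..<nat (-n)}. f i) \<in> T"
        proof (rule M.subspace_sum[OF T])
          fix i assume i: "i \<in> {1..<nat (-n)}"
          have "nat (- (n + int i)) < nat (-n)" using i False by auto
          then have "\<forall>c. Y u c a (Y y (n + int i) e vac) \<in> T" by (rule less)
          then show "f i \<in> T" unfolding f_def using M.subspace_scale[OF T] by blast
        qed
        have "f 0 = Y (Y u c a y) n (e + a) vac - (\<Sum>i\<in>{1..<nat (-n)}. f i)"
          using E E2 by simp
        then show "Y u c a (Y y n e vac) \<in> T"
          using M.subspace_diff[OF T H rest] f0 by simp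
      qed
    qed
  qed
  then show ?thesis by blast
qed

lemma tv_D2:
  assumes T: "M.subspace T" and x: "x \<in> V" and u: "u \<in> V"
    and H: "\<And>q d c. Y u q d (Y x c A vac) \<in> T"
  shows "Y x c A (Y u n e vac) \<in> T"
proof -
  obtain N where N: "\<forall>m0\<ge>N. \<forall>m. Y x m0 m u = 0" using tv_trunc[OF x u] by blast
  define L where "L = nat (max N 0)"
  define ll where "ll = int L"
  have llN: "ll \<ge> N" "ll \<ge> 0" unfolding ll_def L_def by auto
  have "\<forall>c. Y x c A (Y u n e vac) \<in> T"
  proof (induction "nat (-n)" arbitrary: n rule: less_induct)
    case less
    show ?case
    proof (cases "n \<ge> 0")
      case True
      then show ?thesis using tv_creation[OF u True] tv_Y0R[OF x] M.subspace_0[OF T] by simp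
    next
      case False
      show ?thesis
      proof
        fix c
        define p where "p = c - ll"
        define s where "s = (of_int ((-1) ^ nat \<bar>ll\<bar>) :: complex)"
        define g where "g i = Y x (ll + p - int i) A (Y u (n + int i) e vac)" for i
        define k where "k i = Y u (ll + n - int i) e (Y x (p + int i) A vac)" for i
        define h where "h i = smul ((-1) ^ i * ((of_int ll :: complex) gchoose i)) (g i - smul s (k i))" for i
        have J: "Sum_any (\<lambda>i. smul ((of_int p :: complex) gchoose i) (Y (Y x (ll + int i) A u) (p + n - int i) (e + A) vac))
          = Sum_any (\<lambda>i. smul ((-1) ^ i * ((of_int ll :: complex) gchoose i))
                 (Y x (ll + p - int i) A (Y u (n + int i) ((e + A) - A) vac)
                  - smul (of_int ((-1) ^ nat \<bar>ll\<bar>)) (Y u (ll + n - int i) ((e + A) - A) (Y x (p + int i) A vac))))"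
          by (rule tv_jac[OF x u tv_vac])
        have LHS: "(\<lambda>i. smul ((of_int p :: complex) gchoose i) (Y (Y x (ll + int i) A u) (p + n - int i) (e + A) vac)) = (\<lambda>i. 0)"
        proof
          fix i
          have "Y x (ll + int i) A u = 0" using N llN by auto
          then show "smul ((of_int p :: complex) gchoose i) (Y (Y x (ll + int i) A u) (p + n - int i) (e + A) vac) = 0"
            using tv_Y0L[OF tv_vac] by simp
        qed
        have RHS: "Sum_any h = (\<Sum>i\<in>{..L}. h i)"
        proof (rule Sum_any.expand_superset)
          show "{i. h i \<noteq> 0} \<subseteq> {..L}"
          proof
            fix i assume "i \<in> {i. h i \<noteq> 0}"
            then show "i \<in> {..L}" unfolding h_def ll_def using gch_nat_big[of L i]
              by (cases "L < i") auto
          qed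
        qed simp
        have Z: "0 = (\<Sum>i\<in>{..L}. h i)"
          using J unfolding LHS RHS[symmetric] by (simp add: h_def g_def k_def s_def)
        have S: "{..L} = insert 0 {1..L}" by auto
        have Z2: "0 = h 0 + (\<Sum>i\<in>{1..L}. h i)" using Z unfolding S by simp
        have kT: "k i \<in> T" for i unfolding k_def by (rule H)
        have rest: "(\<Sum>i\<in>{1..L}. h i) \<in> T"
        proof (rule M.subspace_sum[OF T])
          fix i assume i: "i \<in> {1..L}"
          have "nat (- (n + int i)) < nat (-n)" using i False by auto
          then have "\<forall>c. Y x c A (Y u (n + int i) e vac) \<in> T" by (rule less)
          then have "g i \<in> T" unfolding g_def by blast
          then show "h i \<in> T" unfolding h_def
            using M.subspace_scale[OF T] M.subspace_diff[OF T] kT by blast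
        qed
        have h0: "h 0 = g 0 - smul s (k 0)" by (simp add: h_def)
        have "g 0 = smul s (k 0) - (\<Sum>i\<in>{1..L}. h i)"
          using Z2 h0 by (simp add: algebra_simps eq_neg_iff_add_eq_0)
        moreover have "g 0 \<in> T \<longleftrightarrow> smul s (k 0) - (\<Sum>i\<in>{1..L}. h i) \<in> T" using calculation by simp
        ultimately have "g 0 \<in> T"
          using M.subspace_diff[OF T M.subspace_scale[OF T kT] rest] by simp
        then show "Y x c A (Y u n e vac) \<in> T" by (simp add: g_def p_def)
      qed
    qed
  qed
  then show ?thesis by blast
qed


lemma tv_gen: "v \<in> V \<Longrightarrow> Y v m0 m vac \<in> V0 smul V Y vac"
  unfolding V0_def by (rule M.span_base) blast

lemma tv_V0_subspace: "M.subspace (V0 smul V Y vac)"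
  unfolding V0_def by (rule M.subspace_span)

lemma tv_V0_sub: "V0 smul V Y vac \<subseteq> V"
  unfolding V0_def
  by (rule M.span_minimal) (use tv_closed tv_vac tv_sub in auto)

lemma tv_vac_V0: "vac \<in> V0 smul V Y vac"
proof -
  have "Y vac (-1) 0 vac = vac" using tv_vacuum[OF tv_vac] by simp
  then show ?thesis using tv_gen[OF tv_vac, of "-1" 0] by simp
qed

lemma tv_V0_closed:
  assumes u: "u \<in> V" and v: "v \<in> V0 smul V Y vac"
  shows "Y u c a v \<in> V0 smul V Y vac"
proof -
  let ?S = "{v \<in> V. \<forall>c a. Y u c a v \<in> V0 smul V Y vac}"
  have "M.span {Y v m0 m vac |v m0 m. v \<in> V} \<subseteq> ?S"
  proof (rule M.span_minimal)
    show "{Y v m0 m vac |v m0 m. v \<in> V} \<subseteq> ?S"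
    proof
      fix z assume "z \<in> {Y v m0 m vac |v m0 m. v \<in> V}"
      then obtain y n e where y: "y \<in> V" and z: "z = Y y n e vac" by blast
      have "\<forall>c a. Y u c a z \<in> V0 smul V Y vac"
      proof (intro allI)
        fix c a
        show "Y u c a z \<in> V0 smul V Y vac" unfolding z
          by (rule tv_D1[OF tv_V0_subspace u y]) (rule tv_gen[OF tv_closed[OF u y]])
      qed
      then show "z \<in> ?S" using z tv_closed[OF y tv_vac] by blast
    qed
    show "M.subspace ?S"
    proof (rule M.subspaceI)
      show "0 \<in> ?S" using tv_0V tv_Y0R[OF u] M.subspace_0[OF tv_V0_subspace] by simp
      fix x y assume x: "x \<in> ?S" and y: "y \<in> ?S"
      then show "x + y \<in> ?S"
        using tv_addR[OF u] M.subspace_add[OF tv_V0_subspace] M.subspace_add[OF tv_sub] by auto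
    next
      fix k x assume x: "x \<in> ?S"
      then show "smul k x \<in> ?S"
        using tv_smulR[OF u] M.subspace_scale[OF tv_V0_subspace] M.subspace_scale[OF tv_sub] by auto
    qed
  qed
  then show ?thesis using v unfolding V0_def by blast
qed

lemma tv_tva_V0: "toroidal_va smul (V0 smul V Y vac) Y vac"
  using tv_V0_sub
  unfolding toroidal_va_def
  apply (intro conjI)
  subgoal using TV by (simp add: toroidal_va_def)
  subgoal by (rule tv_V0_subspace)
  subgoal by (rule tv_vac_V0)
  subgoal using tv_V0_closed by blast
  subgoal using tv_addL by blast
  subgoal using tv_smulL by blast
  subgoal using tv_addR by blast
  subgoal using tv_smulR by blast
  subgoal using tv_trunc by blast
  subgoal using tv_vacuum by blast
  subgoal using tv_creation by blast
  apply (intro ballI allI)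
  apply (rule tv_jac)
  apply blast+
  done

lemma tv_gen_modes:
  assumes u: "u \<in> V"
  shows "Y (Y u l a vac) (-1) b vac = (if b = a then Y u l a vac else 0)"
proof -
  have F: "(\<lambda>i. smul ((-1) ^ i * ((of_int l :: complex) gchoose i))
                 (Y u (l - int i) a (Y vac (-1 + int i) (b - a) vac)))
        = (\<lambda>i. if i = 0 then (if b = a then Y u l a vac else 0) else 0)"
  proof
    fix i
    show "smul ((-1) ^ i * ((of_int l :: complex) gchoose i))
                 (Y u (l - int i) a (Y vac (-1 + int i) (b - a) vac))
        = (if i = 0 then (if b = a then Y u l a vac else 0) else 0)"
      using tv_vacuum[OF tv_vac, of "-1 + int i" "b - a"] tv_Y0R[OF u] by auto
  qed
  show ?thesis using tv_L1[OF u tv_vac, of l a "-1" b] unfolding F by simp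
qed

lemma tv_V0_decomp:
  assumes j: "j \<in> V0 smul V Y vac"
  shows "\<exists>A. finite A \<and> (\<forall>b. b \<notin> A \<longrightarrow> Y j (-1) b vac = 0) \<and> j = (\<Sum>b\<in>A. Y j (-1) b vac)"
proof -
  let ?P = "\<lambda>j. j \<in> V \<and> (\<exists>A. finite A \<and> (\<forall>b. b \<notin> A \<longrightarrow> Y j (-1) b vac = 0) \<and> j = (\<Sum>b\<in>A. Y j (-1) b vac))"
  have "V0 smul V Y vac \<subseteq> Collect ?P"
    unfolding V0_def
  proof (rule M.span_minimal)
    show "{Y v m0 m vac |v m0 m. v \<in> V} \<subseteq> Collect ?P"
    proof
      fix z assume "z \<in> {Y v m0 m vac |v m0 m. v \<in> V}"
      then obtain y n e where y: "y \<in> V" and z: "z = Y y n e vac" by blast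
      have "finite {e} \<and> (\<forall>b. b \<notin> {e} \<longrightarrow> Y z (-1) b vac = 0) \<and> z = (\<Sum>b\<in>{e}. Y z (-1) b vac)"
        unfolding z using tv_gen_modes[OF y, of n e] by auto
      then show "z \<in> Collect ?P" using z tv_closed[OF y tv_vac] by blast
    qed
    show "M.subspace (Collect ?P)"
    proof (rule M.subspaceI)
      have "finite {} \<and> (\<forall>b. b \<notin> {} \<longrightarrow> Y 0 (-1) b vac = 0) \<and> 0 = (\<Sum>b\<in>{}. Y 0 (-1) b vac)"
        using tv_Y0L[OF tv_vac] by simp
      then show "0 \<in> Collect ?P" using tv_0V by blast
    next
      fix x y assume x: "x \<in> Collect ?P" and y: "y \<in> Collect ?P"
      then obtain A B where xV: "x \<in> V" and yV: "y \<in> V"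
        and A: "finite A" "\<forall>b. b \<notin> A \<longrightarrow> Y x (-1) b vac = 0" "x = (\<Sum>b\<in>A. Y x (-1) b vac)"
        and B: "finite B" "\<forall>b. b \<notin> B \<longrightarrow> Y y (-1) b vac = 0" "y = (\<Sum>b\<in>B. Y y (-1) b vac)"
        by blast
      have add: "Y (x + y) (-1) b vac = Y x (-1) b vac + Y y (-1) b vac" for b
        by (rule tv_addL[OF xV yV tv_vac])
      have sx: "(\<Sum>b\<in>A \<union> B. Y x (-1) b vac) = (\<Sum>b\<in>A. Y x (-1) b vac)"
        by (rule sum.mono_neutral_right) (use A B in auto)
      have sy: "(\<Sum>b\<in>A \<union> B. Y y (-1) b vac) = (\<Sum>b\<in>B. Y y (-1) b vac)"
        by (rule sum.mono_neutral_right) (use A B in auto)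
      have "finite (A \<union> B) \<and> (\<forall>b. b \<notin> A \<union> B \<longrightarrow> Y (x + y) (-1) b vac = 0)
          \<and> x + y = (\<Sum>b\<in>A \<union> B. Y (x + y) (-1) b vac)"
        unfolding add sum.distrib sx sy using A B by auto
      then show "x + y \<in> Collect ?P" using M.subspace_add[OF tv_sub xV yV] by blast
    next
      fix k x assume x: "x \<in> Collect ?P"
      then obtain A where xV: "x \<in> V"
        and A: "finite A" "\<forall>b. b \<notin> A \<longrightarrow> Y x (-1) b vac = 0" "x = (\<Sum>b\<in>A. Y x (-1) b vac)"
        by blast
      have sc: "Y (smul k x) (-1) b vac = smul k (Y x (-1) b vac)" for b
        by (rule tv_smulL[OF xV tv_vac])
      have "finite A \<and> (\<forall>b. b \<notin> A \<longrightarrow> Y (smul k x) (-1) b vac = 0)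
          \<and> smul k x = (\<Sum>b\<in>A. Y (smul k x) (-1) b vac)"
        unfolding sc M.scale_sum_right[symmetric] using A by auto
      then show "smul k x \<in> Collect ?P" using M.subspace_scale[OF tv_sub xV] by blast
    qed
  qed
  then show ?thesis using j by blast
qed

lemma tv_KV0:
  assumes j: "j \<in> V0 smul V Y vac" and k: "j \<in> K_Y V Y"
  shows "j = 0"
proof -
  obtain A where A: "j = (\<Sum>b\<in>A. Y j (-1) b vac)" using tv_V0_decomp[OF j] by blast
  have "Y j (-1) b vac = 0" for b using k tv_vac unfolding K_Y_def by blast
  then show ?thesis using A by simp
qed

end

theorem proposition2p23:
  fixes smul :: "complex \<Rightarrow> 'v::ab_group_add \<Rightarrow> 'v"
    and V :: "'v set"
    and Y :: "'v \<Rightarrow> int \<Rightarrow> int ^ 'r \<Rightarrow> 'v \<Rightarrow> 'v"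
    and vac :: 'v
    and smulW :: "complex \<Rightarrow> 'w::ab_group_add \<Rightarrow> 'w"
    and W :: "'w set"
    and YW :: "'w \<Rightarrow> int \<Rightarrow> int ^ 'r \<Rightarrow> 'w \<Rightarrow> 'w"
    and vacW :: 'w
    and \<pi> :: "'v \<Rightarrow> 'w"
  assumes "toroidal_va smul V Y vac"
    and "is_quotient_by_KY smul V Y vac smulW W YW vacW \<pi>"
  shows "simple_tva smulW W YW vacW \<longleftrightarrow> simple_tva smul (V0 smul V Y vac) Y vac"
proof -
  note TV = assms(1)
  have Q: "toroidal_va smulW W YW vacW" and piS: "\<pi> ` V = W"
    and piadd: "\<And>u v. u \<in> V \<Longrightarrow> v \<in> V \<Longrightarrow> \<pi> (u + v) = \<pi> u + \<pi> v"
    and pismul: "\<And>u a. u \<in> V \<Longrightarrow> \<pi> (smul a u) = smulW a (\<pi> u)"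
    and pivac: "\<pi> vac = vacW"
    and piY: "\<And>u v m0 m. u \<in> V \<Longrightarrow> v \<in> V \<Longrightarrow> \<pi> (Y u m0 m v) = YW (\<pi> u) m0 m (\<pi> v)"
    and piker: "{v \<in> V. \<pi> v = 0} = K_Y V Y"
    using assms(2) unfolding is_quotient_by_KY_def by auto
  interpret M: module smul by (rule tv_module[OF TV])
  interpret MW: module smulW by (rule tv_module[OF Q])
  let ?V0 = "V0 smul V Y vac"
  have V0V: "?V0 \<subseteq> V" by (rule tv_V0_sub[OF TV])
  have vacV: "vac \<in> V" by (rule tv_vac[OF TV])
  have zV: "0 \<in> V" by (rule tv_0V[OF TV])
  have pi0: "\<pi> 0 = 0" using piadd[OF zV zV] by simp
  have piK: "\<And>x. x \<in> V \<Longrightarrow> \<pi> x = 0 \<longleftrightarrow> x \<in> K_Y V Y" using piker by blast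
  have KV: "K_Y V Y \<subseteq> V" unfolding K_Y_def by blast
  show ?thesis
  proof
    assume SW: "simple_tva smulW W YW vacW"
    show "simple_tva smul ?V0 Y vac"
      unfolding simple_tva_def
    proof (intro conjI allI impI)
      show "toroidal_va smul ?V0 Y vac" by (rule tv_tva_V0[OF TV])
      fix J assume J: "tva_ideal smul ?V0 Y J"
      have Jsub: "M.subspace J" and JV0: "J \<subseteq> ?V0"
        and Jcl: "\<And>u v m0 m. u \<in> ?V0 \<Longrightarrow> v \<in> ?V0 \<Longrightarrow> u \<in> J \<or> v \<in> J \<Longrightarrow> Y u m0 m v \<in> J"
        using J unfolding tva_ideal_def by auto
      have HJ: "Y u k a j \<in> J" if u: "u \<in> V" and j: "j \<in> J" for u k a j
      proof -
        have jV: "j \<in> V" using j JV0 V0V by blast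
        have "Y (Y u (-1) a vac) k a j \<in> J"
          using Jcl[OF tv_gen[OF TV u] _] j JV0 by blast
        then show ?thesis using tv_L2[OF TV u jV] by simp
      qed
      define I where "I = {x \<in> V. \<forall>n m. Y x n m vac \<in> J}"
      have IV: "I \<subseteq> V" unfolding I_def by blast
      have Isub: "M.subspace I"
      proof (rule M.subspaceI)
        show "0 \<in> I" unfolding I_def using zV tv_Y0L[OF TV vacV] M.subspace_0[OF Jsub] by simp
      next
        fix x y assume "x \<in> I" "y \<in> I"
        then show "x + y \<in> I" unfolding I_def
          using tv_addL[OF TV _ _ vacV] M.subspace_add[OF Jsub] M.subspace_add[OF tv_sub[OF TV]] by auto
      next
        fix c x assume "x \<in> I"
        then show "smul c x \<in> I" unfolding I_def
          using tv_smulL[OF TV _ vacV] M.subspace_scale[OF Jsub] M.subspace_scale[OF tv_sub[OF TV]] by auto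
      qed
      have Icl: "Y u l a v \<in> I" if u: "u \<in> V" and v: "v \<in> V" and uv: "u \<in> I \<or> v \<in> I" for u v l a
      proof -
        have "Y (Y u l a v) n b vac \<in> J" for n b
        proof -
          have trm: "Y u (l - int i) a (Y v (n + int i) (b - a) vac) \<in> J" for i
          proof (cases "v \<in> I")
            case True
            then have "Y v (n + int i) (b - a) vac \<in> J" unfolding I_def by blast
            then show ?thesis by (rule HJ[OF u])
          next
            case False
            then have uI: "u \<in> I" using uv by blast
            show ?thesis
            proof (rule tv_D2[OF TV Jsub u v])
              fix q d c
              have "Y u c a vac \<in> J" using uI unfolding I_def by blast
              then show "Y v q d (Y u c a vac) \<in> J" by (rule HJ[OF v])
            qed
          qed
          show ?thesis unfolding tv_L1[OF TV u v]
            by (rule Sum_any_in_subspace[OF tv_module[OF TV] Jsub])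
               (rule M.subspace_scale[OF Jsub trm])
        qed
        then show ?thesis unfolding I_def using tv_closed[OF TV u v] by blast
      qed
      have KI: "K_Y V Y \<subseteq> I"
        unfolding I_def K_Y_def using vacV M.subspace_0[OF Jsub] by auto
      have JI: "J \<subseteq> I"
      proof
        fix j assume j: "j \<in> J"
        have "Y j n m vac \<in> J" for n m using Jcl[OF _ tv_vac_V0[OF TV]] j JV0 by blast
        then show "j \<in> I" unfolding I_def using j JV0 V0V by blast
      qed
      define IW where "IW = \<pi> ` I"
      have IWideal: "tva_ideal smulW W YW IW"
        unfolding tva_ideal_def
      proof (intro conjI ballI allI impI)
        show "MW.subspace IW"
        proof (rule MW.subspaceI)
          show "0 \<in> IW" unfolding IW_def using M.subspace_0[OF Isub] pi0 by force
        next
          fix x y assume "x \<in> IW" "y \<in> IW"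
          then obtain x' y' where "x' \<in> I" "y' \<in> I" "x = \<pi> x'" "y = \<pi> y'" unfolding IW_def by blast
          then show "x + y \<in> IW" unfolding IW_def
            using piadd IV M.subspace_add[OF Isub] by (metis image_eqI subsetD)
        next
          fix c x assume "x \<in> IW"
          then obtain x' where "x' \<in> I" "x = \<pi> x'" unfolding IW_def by blast
          then show "smulW c x \<in> IW" unfolding IW_def
            using pismul IV M.subspace_scale[OF Isub] by (metis image_eqI subsetD)
        qed
        show "IW \<subseteq> W" unfolding IW_def using IV piS by blast
        fix u v m0 m assume u: "u \<in> W" and v: "v \<in> W" and uv: "u \<in> IW \<or> v \<in> IW"
        obtain u' v' where u': "u' \<in> V" "u = \<pi> u'" "u \<in> IW \<longrightarrow> u' \<in> I"
          and v': "v' \<in> V" "v = \<pi> v'" "v \<in> IW \<longrightarrow> v' \<in> I"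
        proof -
          obtain u' where A: "u' \<in> V" "u = \<pi> u'" "u \<in> IW \<longrightarrow> u' \<in> I"
          proof (cases "u \<in> IW")
            case True then show ?thesis using that IV unfolding IW_def by blast
          next
            case False then show ?thesis using that u piS by blast
          qed
          obtain v' where B: "v' \<in> V" "v = \<pi> v'" "v \<in> IW \<longrightarrow> v' \<in> I"
          proof (cases "v \<in> IW")
            case True then show ?thesis using that IV unfolding IW_def by blast
          next
            case False then show ?thesis using that v piS by blast
          qed
          show ?thesis using that A B by blast
        qed
        have "Y u' m0 m v' \<in> I" using Icl[OF u'(1) v'(1)] uv u' v' by blast
        then have "\<pi> (Y u' m0 m v') \<in> IW" unfolding IW_def by blast
        then show "YW u m0 m v \<in> IW" using piY[OF u'(1) v'(1)] u'(2) v'(2) by simp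
      qed
      then have "IW = {0} \<or> IW = W" using SW unfolding simple_tva_def by blast
      then show "J = {0} \<or> J = ?V0"
      proof
        assume IW0: "IW = {0}"
        have "J \<subseteq> {0}"
        proof
          fix j assume j: "j \<in> J"
          then have "j \<in> I" using JI by blast
          then have "\<pi> j = 0" using IW0 unfolding IW_def by blast
          then have "j \<in> K_Y V Y" using piK[of j] j JV0 V0V by blast
          then show "j \<in> {0}" using tv_KV0[OF TV _] j JV0 by blast
        qed
        then show ?thesis using M.subspace_0[OF Jsub] by blast
      next
        assume IWW: "IW = W"
        have "vacW \<in> W" using tv_vac[OF Q] .
        then obtain x where x: "x \<in> I" "\<pi> x = \<pi> vac" using IWW pivac unfolding IW_def by auto
        have xV: "x \<in> V" using x IV by blast
        have dV: "vac - x \<in> V" using M.subspace_diff[OF tv_sub[OF TV] vacV xV] .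
        have "\<pi> vac = \<pi> (vac - x) + \<pi> x" using piadd[OF dV xV] by simp
        then have "\<pi> (vac - x) = 0" using x by simp
        then have "vac - x \<in> I" using piK[OF dV] KI by blast
        then have "(vac - x) + x \<in> I" using M.subspace_add[OF Isub _ x(1)] by blast
        then have "vac \<in> I" by simp
        then have "Y vac (-1) 0 vac \<in> J" unfolding I_def by blast
        then have vJ: "vac \<in> J" using tv_vacuum[OF TV vacV, of "-1" 0] by simp
        have "?V0 \<subseteq> J"
        proof
          fix v assume v: "v \<in> ?V0"
          have "Y vac (-1) 0 v \<in> J" using Jcl[OF tv_vac_V0[OF TV] v] vJ by blast
          then show "v \<in> J" using tv_vacuum[OF TV, of v "-1" 0] v V0V by auto
        qed
        then show ?thesis using JV0 by blast
      qed
    qed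
  next
    assume S0: "simple_tva smul ?V0 Y vac"
    show "simple_tva smulW W YW vacW"
      unfolding simple_tva_def
    proof (intro conjI allI impI)
      show "toroidal_va smulW W YW vacW" by (rule Q)
      fix IW assume IWi: "tva_ideal smulW W YW IW"
      have IWsub: "MW.subspace IW" and IWW: "IW \<subseteq> W"
        and IWcl: "\<And>u v m0 m. u \<in> W \<Longrightarrow> v \<in> W \<Longrightarrow> u \<in> IW \<or> v \<in> IW \<Longrightarrow> YW u m0 m v \<in> IW"
        using IWi unfolding tva_ideal_def by auto
      define I where "I = {x \<in> V. \<pi> x \<in> IW}"
      define J where "J = I \<inter> ?V0"
      have Isub: "M.subspace I"
      proof (rule M.subspaceI)
        show "0 \<in> I" unfolding I_def using zV pi0 MW.subspace_0[OF IWsub] by simp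
      next
        fix x y assume "x \<in> I" "y \<in> I"
        then show "x + y \<in> I" unfolding I_def
          using piadd MW.subspace_add[OF IWsub] M.subspace_add[OF tv_sub[OF TV]] by auto
      next
        fix c x assume "x \<in> I"
        then show "smul c x \<in> I" unfolding I_def
          using pismul MW.subspace_scale[OF IWsub] M.subspace_scale[OF tv_sub[OF TV]] by auto
      qed
      have Jideal: "tva_ideal smul ?V0 Y J"
        unfolding tva_ideal_def
      proof (intro conjI ballI allI impI)
        show "M.subspace J" unfolding J_def by (rule M.subspace_inter[OF Isub tv_V0_subspace[OF TV]])
        show "J \<subseteq> ?V0" unfolding J_def by blast
        fix u v m0 m assume u: "u \<in> ?V0" and v: "v \<in> ?V0" and uv: "u \<in> J \<or> v \<in> J"
        have uV: "u \<in> V" and vV: "v \<in> V" using u v V0V by auto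
        have piu: "\<pi> u \<in> W" "\<pi> v \<in> W" using uV vV piS by auto
        have "\<pi> u \<in> IW \<or> \<pi> v \<in> IW" using uv unfolding J_def I_def by blast
        then have "YW (\<pi> u) m0 m (\<pi> v) \<in> IW" using IWcl piu by blast
        then have "Y u m0 m v \<in> I" unfolding I_def using piY[OF uV vV] tv_closed[OF TV uV vV] by simp
        then show "Y u m0 m v \<in> J" unfolding J_def using tv_V0_closed[OF TV uV v] by blast
      qed
      then have "J = {0} \<or> J = ?V0" using S0 unfolding simple_tva_def by blast
      then show "IW = {0} \<or> IW = W"
      proof
        assume J0: "J = {0}"
        have "IW \<subseteq> {0}"
        proof
          fix w assume w: "w \<in> IW"
          then obtain x where x: "x \<in> V" "w = \<pi> x" using IWW piS by blast
          have xI: "x \<in> I" unfolding I_def using x w by simp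
          have "x \<in> K_Y V Y"
          proof (rule ccontr)
            assume "x \<notin> K_Y V Y"
            then obtain m0 m z where z: "z \<in> V" and nz: "Y x m0 m z \<noteq> 0"
              unfolding K_Y_def using x by blast
            define e where "e = Y x (-1) m vac"
            have eV0: "e \<in> ?V0" unfolding e_def by (rule tv_gen[OF TV x(1)])
            have "\<pi> e = YW (\<pi> x) (-1) m (\<pi> vac)" unfolding e_def by (rule piY[OF x(1) vacV])
            moreover have "YW (\<pi> x) (-1) m (\<pi> vac) \<in> IW"
              using IWcl[of "\<pi> x" "\<pi> vac"] x piS vacV w by blast
            ultimately have "e \<in> I" unfolding I_def e_def using tv_closed[OF TV x(1) vacV] by simp
            then have "e = 0" using J0 eV0 unfolding J_def by blast
            then have "Y e m0 m z = 0" using tv_Y0L[OF TV z] by simp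
            moreover have "Y e m0 m z = Y x m0 m z" unfolding e_def by (rule tv_L2[OF TV x(1) z])
            ultimately show False using nz by simp
          qed
          then show "w \<in> {0}" using piK[OF x(1)] x by simp
        qed
        then show ?thesis using MW.subspace_0[OF IWsub] by blast
      next
        assume JV: "J = ?V0"
        have "vac \<in> I" using tv_vac_V0[OF TV] JV unfolding J_def by blast
        then have vW: "vacW \<in> IW" unfolding I_def using pivac by simp
        have "W \<subseteq> IW"
        proof
          fix w assume w: "w \<in> W"
          have "YW vacW (-1) 0 w \<in> IW" using IWcl[OF tv_vac[OF Q] w] vW by blast
          then show "w \<in> IW" using tv_vacuum[OF Q w, of "-1" 0] by simp
        qed
        then show ?thesis using IWW by blast
      qed
    qed
  qed
qed

end
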